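(* Let $I$ be a set of players with $|I|\ge2$ and $S$ a set of states of nature with $|S|\ge2$. Then there is no universal $\infty$-type space on $S$ for player set $I$, and there is no universal $*$-type space on $S$ for player set $I$.
   Context: An $\infty$-field on a nonempty set $M$ is a field of subsets closed under arbitrary intersections. For an $\infty$-field $\Sigma$ on $M$, $\Delta^\infty(M,\Sigma)$ is the set of finitely additive probability measures on $(M,\Sigma)$, endowed with the $\infty$-field generated by the sets $\{\mu:\mu(E)\ge p\}$, $E\in\Sigma$, $p\in[0,1]$. An $\infty$-type space on $S$ for $I$ is $\langle M,\Sigma,(T_i)_{i\in I},\theta\rangle$ with $M$ nonempty, $\Sigma$ an $\infty$-field on $M$, each $T_i:M\to\Delta^\infty(M,\Sigma)$ measurable such that for all $m\in M$, $A\in\Sigma$: $\{m':T_i(m')=T_i(m)\}\subseteq A$ implies $T_i(m)(A)=1$; and $\theta:M\to S$ $\Sigma$–$\mathrm{Pow}(S)$-measurable. A $*$-type space on $S$ for $I$ is $\langle M,(T_i)_{i\in I},\theta\rangle$ with $M$ nonempty, each $T_i$ a function from $M$ to finitely additive probability measures on $(M,\mathrm{Pow}(M))$ with $T_i(m)(\{m':T_i(m')=T_i(m)\})=1$, and $\theta:M\to S$ any function. A type morphism from $\langle M',\Sigma',(T'_i),\theta'\rangle$ to $\langle M,\Sigma,(T_i),\theta\rangle$ (for $*$-type spaces take $\Sigma=\mathrm{Pow}(M)$) is a $\Sigma'$–$\Sigma$-measurable $f:M'\to M$ with $\theta'(m')=\theta(f(m'))$ and $T_i(f(m'))(E)=T'_i(m')(f^{-1}(E))$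 for all $m'$, $E\in\Sigma$, $i\in I$. An $\infty$-type space (resp. $*$-type space) is universal if every $\infty$-type space (resp. $*$-type space) on $S$ for $I$ admits a unique type morphism into it. *)

theory Defs
  imports Complex_Main
begin

definition field_of_sets :: "'a set \<Rightarrow> 'a set set \<Rightarrow> bool" where
  "field_of_sets M \<Sigma> \<longleftrightarrow> \<Sigma> \<subseteq> Pow M \<and> M \<in> \<Sigma> \<and>
     (\<forall>A\<in>\<Sigma>. M - A \<in> \<Sigma>) \<and> (\<forall>A\<in>\<Sigma>. \<forall>B\<in>\<Sigma>. A \<union> B \<in> \<Sigma>)"

text \<open>An infinity-field: a field closed under arbitrary (nonempty) intersections
  (the empty intersection is M by convention, which is in the field anyway).\<close>
definition inf_field :: "'a set \<Rightarrow> 'a set set \<Rightarrow> bool" where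
  "inf_field M \<Sigma> \<longleftrightarrow> field_of_sets M \<Sigma> \<and> (\<forall>F. F \<subseteq> \<Sigma> \<and> F \<noteq> {} \<longrightarrow> \<Inter>F \<in> \<Sigma>)"

definition inf_field_generated :: "'a set \<Rightarrow> 'a set set \<Rightarrow> 'a set set" where
  "inf_field_generated M G = \<Inter>{\<Sigma>. inf_field M \<Sigma> \<and> G \<subseteq> \<Sigma>}"

text \<open>A finitely additive probability measure on (M, Sigma), represented as a function on
  sets which is 0 outside Sigma (so that equality of measures is equality of functions).\<close>
definition fa_prob :: "'a set \<Rightarrow> 'a set set \<Rightarrow> ('a set \<Rightarrow> real) \<Rightarrow> bool" where
  "fa_prob M \<Sigma> \<mu> \<longleftrightarrow> (\<forall>E\<in>\<Sigma>. 0 \<le> \<mu> E) \<and> \<mu> M = 1 \<and>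
     (\<forall>A\<in>\<Sigma>. \<forall>B\<in>\<Sigma>. A \<inter> B = {} \<longrightarrow> \<mu> (A \<union> B) = \<mu> A + \<mu> B) \<and>
     (\<forall>E. E \<notin> \<Sigma> \<longrightarrow> \<mu> E = 0)"

definition Delta :: "'a set \<Rightarrow> 'a set set \<Rightarrow> ('a set \<Rightarrow> real) set" where
  "Delta M \<Sigma> = {\<mu>. fa_prob M \<Sigma> \<mu>}"

definition Delta_field :: "'a set \<Rightarrow> 'a set set \<Rightarrow> ('a set \<Rightarrow> real) set set" where
  "Delta_field M \<Sigma> = inf_field_generated (Delta M \<Sigma>)
     {{\<mu>\<in>Delta M \<Sigma>. \<mu> E \<ge> p} | E p. E \<in> \<Sigma> \<and> 0 \<le> p \<and> p \<le> 1}"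

definition meas :: "'a set \<Rightarrow> 'a set set \<Rightarrow> 'b set \<Rightarrow> 'b set set \<Rightarrow> ('a \<Rightarrow> 'b) \<Rightarrow> bool" where
  "meas M \<Sigma> N \<Sigma>' f \<longleftrightarrow> (\<forall>x\<in>M. f x \<in> N) \<and> (\<forall>E\<in>\<Sigma>'. {x\<in>M. f x \<in> E} \<in> \<Sigma>)"

definition inf_type_space ::
  "'i set \<Rightarrow> 's set \<Rightarrow> 'm set \<Rightarrow> 'm set set \<Rightarrow> ('i \<Rightarrow> 'm \<Rightarrow> ('m set \<Rightarrow> real)) \<Rightarrow> ('m \<Rightarrow> 's) \<Rightarrow> bool"
  where
  "inf_type_space I S M \<Sigma> T \<theta> \<longleftrightarrow> M \<noteq> {} \<and> inf_field M \<Sigma> \<and>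
     (\<forall>i\<in>I. meas M \<Sigma> (Delta M \<Sigma>) (Delta_field M \<Sigma>) (T i)) \<and>
     (\<forall>i\<in>I. \<forall>m\<in>M. \<forall>A\<in>\<Sigma>. {m'\<in>M. T i m' = T i m} \<subseteq> A \<longrightarrow> T i m A = 1) \<and>
     meas M \<Sigma> S (Pow S) \<theta>"

definition star_type_space ::
  "'i set \<Rightarrow> 's set \<Rightarrow> 'm set \<Rightarrow> ('i \<Rightarrow> 'm \<Rightarrow> ('m set \<Rightarrow> real)) \<Rightarrow> ('m \<Rightarrow> 's) \<Rightarrow> bool"
  where
  "star_type_space I S M T \<theta> \<longleftrightarrow> M \<noteq> {} \<and>
     (\<forall>i\<in>I. \<forall>m\<in>M. fa_prob M (Pow M) (T i m)) \<and>
     (\<forall>i\<in>I. \<forall>m\<in>M. T i m {m'\<in>M. T i m' = T i m} = 1) \<and>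
     (\<forall>m\<in>M. \<theta> m \<in> S)"

definition type_morphism ::
  "'i set \<Rightarrow> 'c set \<Rightarrow> 'c set set \<Rightarrow> ('i \<Rightarrow> 'c \<Rightarrow> ('c set \<Rightarrow> real)) \<Rightarrow> ('c \<Rightarrow> 's) \<Rightarrow>
   'm set \<Rightarrow> 'm set set \<Rightarrow> ('i \<Rightarrow> 'm \<Rightarrow> ('m set \<Rightarrow> real)) \<Rightarrow> ('m \<Rightarrow> 's) \<Rightarrow> ('c \<Rightarrow> 'm) \<Rightarrow> bool"
  where
  "type_morphism I M' \<Sigma>' T' \<theta>' M \<Sigma> T \<theta> f \<longleftrightarrow> meas M' \<Sigma>' M \<Sigma> f \<and>
     (\<forall>m'\<in>M'. \<theta>' m' = \<theta> (f m')) \<and>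
     (\<forall>i\<in>I. \<forall>m'\<in>M'. \<forall>E\<in>\<Sigma>. T i (f m') E = T' i m' {x\<in>M'. f x \<in> E})"

text \<open>Since HOL cannot quantify over types inside a formula, universality is tested
  against all type spaces whose carrier lies in a given type 'c (passed as TYPE('c)).\<close>
definition inf_universal_wrt ::
  "'c itself \<Rightarrow> 'i set \<Rightarrow> 's set \<Rightarrow> 'm set \<Rightarrow> 'm set set \<Rightarrow> ('i \<Rightarrow> 'm \<Rightarrow> ('m set \<Rightarrow> real)) \<Rightarrow> ('m \<Rightarrow> 's) \<Rightarrow> bool"
  where
  "inf_universal_wrt (_::'c itself) I S M \<Sigma> T \<theta> \<longleftrightarrow> inf_type_space I S M \<Sigma> T \<theta> \<and>
     (\<forall>(M'::'c set) \<Sigma>' T' \<theta>'. inf_type_space I S M' \<Sigma>' T' \<theta>' \<longrightarrow>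
        (\<exists>f. type_morphism I M' \<Sigma>' T' \<theta>' M \<Sigma> T \<theta> f) \<and>
        (\<forall>f g. type_morphism I M' \<Sigma>' T' \<theta>' M \<Sigma> T \<theta> f \<and>
               type_morphism I M' \<Sigma>' T' \<theta>' M \<Sigma> T \<theta> g \<longrightarrow> (\<forall>x\<in>M'. f x = g x)))"

definition star_universal_wrt ::
  "'c itself \<Rightarrow> 'i set \<Rightarrow> 's set \<Rightarrow> 'm set \<Rightarrow> ('i \<Rightarrow> 'm \<Rightarrow> ('m set \<Rightarrow> real)) \<Rightarrow> ('m \<Rightarrow> 's) \<Rightarrow> bool"
  where
  "star_universal_wrt (_::'c itself) I S M T \<theta> \<longleftrightarrow> star_type_space I S M T \<theta> \<and>
     (\<forall>(M'::'c set) T' \<theta>'. star_type_space I S M' T' \<theta>' \<longrightarrow>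
        (\<exists>f. type_morphism I M' (Pow M') T' \<theta>' M (Pow M) T \<theta> f) \<and>
        (\<forall>f g. type_morphism I M' (Pow M') T' \<theta>' M (Pow M) T \<theta> f \<and>
               type_morphism I M' (Pow M') T' \<theta>' M (Pow M) T \<theta> g \<longrightarrow> (\<forall>x\<in>M'. f x = g x)))"

end

theory Submission
  imports Defs "HOL-Algebra.Free_Abelian_Groups"
begin

definition pf :: "'x set \<Rightarrow> ('x \<Rightarrow> 'y) \<Rightarrow> 'y set \<Rightarrow> ('x set \<Rightarrow> real) \<Rightarrow> ('y set \<Rightarrow> real)" where
  "pf A h B \<mu> = (\<lambda>E. if E \<subseteq> B then \<mu> {x\<in>A. h x \<in> E} else 0)"

lemma pf_fa:
  assumes fa: "fa_prob A (Pow A) \<mu>" and hB: "h ` A \<subseteq> B"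
  shows "fa_prob B (Pow B) (pf A h B \<mu>)"
  unfolding fa_prob_def
proof (intro conjI ballI allI impI)
  fix E assume "E \<in> Pow B"
  have "{x\<in>A. h x \<in> E} \<in> Pow A" by blast
  hence "0 \<le> \<mu> {x\<in>A. h x \<in> E}" using fa unfolding fa_prob_def by blast
  thus "0 \<le> pf A h B \<mu> E" by (simp add: pf_def)
next
  have "{x\<in>A. h x \<in> B} = A" using hB by auto
  moreover have "\<mu> A = 1" using fa unfolding fa_prob_def by blast
  ultimately show "pf A h B \<mu> B = 1" by (simp add: pf_def)
next
  fix E F assume EF: "E \<in> Pow B" "F \<in> Pow B" "E \<inter> F = {}"
  have 1: "{x\<in>A. h x \<in> E \<union> F} = {x\<in>A. h x \<in> E} \<union> {x\<in>A. h x \<in> F}" by auto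
  have 2: "{x\<in>A. h x \<in> E} \<inter> {x\<in>A. h x \<in> F} = {}" using EF by auto
  have "\<mu> ({x\<in>A. h x \<in> E} \<union> {x\<in>A. h x \<in> F}) = \<mu> {x\<in>A. h x \<in> E} + \<mu> {x\<in>A. h x \<in> F}"
    using fa 2 unfolding fa_prob_def by blast
  thus "pf A h B \<mu> (E \<union> F) = pf A h B \<mu> E + pf A h B \<mu> F" using EF 1 by (simp add: pf_def)
next
  fix E assume "E \<notin> Pow B"
  thus "pf A h B \<mu> E = 0" by (simp add: pf_def)
qed

definition fip :: "'a set \<Rightarrow> 'a set set \<Rightarrow> bool" where
  "fip L G \<longleftrightarrow> (\<forall>H. finite H \<and> H \<subseteq> G \<longrightarrow> L \<inter> \<Inter>H \<noteq> {})"

lemma chain_fin: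
  assumes "finite H" "H \<subseteq> \<Union>C" "C \<noteq> {}" "\<forall>A\<in>C. \<forall>B\<in>C. A \<subseteq> B \<or> B \<subseteq> A"
  shows "\<exists>B\<in>C. H \<subseteq> B"
  using assms(1,2)
proof (induction H rule: finite_induct)
  case empty thus ?case using assms(3) by blast
next
  case (insert x H)
  then obtain B1 where B1: "B1 \<in> C" "H \<subseteq> B1" by blast
  obtain B2 where B2: "B2 \<in> C" "x \<in> B2" using insert.prems by blast
  show ?case
  proof (cases "B1 \<subseteq> B2")
    case True thus ?thesis using B1 B2 by blast
  next
    case False
    hence "B2 \<subseteq> B1" using assms(4) B1 B2 by blast
    thus ?thesis using B1 B2 by blast
  qed
qed

lemma max_fip_exists:
  assumes "fip L F" "F \<subseteq> Pow L"
  shows "\<exists>G. F \<subseteq> G \<and> G \<subseteq> Pow L \<and> fip L G \<and> (\<forall>X. X \<subseteq> L \<longrightarrow> fip L (insert X G) \<longrightarrow> X \<in> G)"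
proof -
  define A where "A = {G. F \<subseteq> G \<and> G \<subseteq> Pow L \<and> fip L G}"
  have "\<exists>U\<in>A. \<forall>X\<in>C. X \<subseteq> U" if C: "C \<in> chains A" for C
  proof (cases "C = {}")
    case True
    have "F \<in> A" using assms by (simp add: A_def)
    thus ?thesis using True by blast
  next
    case False
    have CA: "C \<subseteq> A" and ch: "\<forall>A\<in>C. \<forall>B\<in>C. A \<subseteq> B \<or> B \<subseteq> A"
      using C unfolding chains_def chain_subset_def by blast+
    have "fip L (\<Union>C)" unfolding fip_def
    proof (intro allI impI)
      fix H assume H: "finite H \<and> H \<subseteq> \<Union>C"
      then obtain B where B: "B \<in> C" "H \<subseteq> B" using chain_fin[OF _ _ False ch] by blast
      hence "fip L B" using CA by (auto simp: A_def)
      thus "L \<inter> \<Inter>H \<noteq> {}" using H B unfolding fip_def by blast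
    qed
    moreover have "F \<subseteq> \<Union>C"
    proof -
      obtain B where B: "B \<in> C" using False by blast
      hence "F \<subseteq> B" using CA by (auto simp: A_def)
      thus ?thesis using B by blast
    qed
    moreover have "\<Union>C \<subseteq> Pow L" using CA by (auto simp: A_def)
    ultimately have "\<Union>C \<in> A" by (simp add: A_def)
    thus ?thesis by blast
  qed
  hence "\<forall>C\<in>chains A. \<exists>U\<in>A. \<forall>X\<in>C. X \<subseteq> U" by blast
  then obtain G where G: "G \<in> A" "\<forall>X\<in>A. G \<subseteq> X \<longrightarrow> X = G" using Zorn_Lemma2[of A] by blast
  have G1: "F \<subseteq> G" "G \<subseteq> Pow L" "fip L G" using G(1) by (auto simp: A_def)
  have G2: "X \<in> G" if "X \<subseteq> L" "fip L (insert X G)" for X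
  proof -
    have "insert X G \<in> A" using G1 that by (auto simp: A_def)
    hence "insert X G = G" using G(2) by blast
    thus "X \<in> G" by blast
  qed
  show ?thesis using G1 G2 by blast
qed
locale maxfip =
  fixes L :: "'a set" and G :: "'a set set"
  assumes sub: "G \<subseteq> Pow L" and fipG: "fip L G"
    and maxi: "\<And>X. X \<subseteq> L \<Longrightarrow> fip L (insert X G) \<Longrightarrow> X \<in> G"
begin

lemma fipD: "finite H \<Longrightarrow> H \<subseteq> G \<Longrightarrow> L \<inter> \<Inter>H \<noteq> {}"
  using fipG unfolding fip_def by blast

lemma disj: "X \<in> G \<Longrightarrow> Y \<in> G \<Longrightarrow> L \<inter> X \<inter> Y \<noteq> {}"
proof -
  assume a: "X \<in> G" "Y \<in> G"
  have "L \<inter> \<Inter>{X, Y} \<noteq> {}" by (rule fipD) (use a in auto)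
  thus ?thesis by (simp add: Int_assoc)
qed

lemma upward: "X \<in> G \<Longrightarrow> X \<subseteq> Y \<Longrightarrow> Y \<subseteq> L \<Longrightarrow> Y \<in> G"
proof -
  assume a: "X \<in> G" "X \<subseteq> Y" "Y \<subseteq> L"
  have "fip L (insert Y G)" unfolding fip_def
  proof (intro allI impI)
    fix H assume H: "finite H \<and> H \<subseteq> insert Y G"
    have "L \<inter> \<Inter>(insert X (H - {Y})) \<noteq> {}" by (rule fipD) (use H a in auto)
    moreover have "\<Inter>(insert X (H - {Y})) \<subseteq> \<Inter>H" using a by blast
    ultimately show "L \<inter> \<Inter>H \<noteq> {}" by blast
  qed
  thus ?thesis using maxi a(3) by blast
qed

lemma inter: "X \<in> G \<Longrightarrow> Y \<in> G \<Longrightarrow> X \<inter> Y \<in> G"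
proof -
  assume a: "X \<in> G" "Y \<in> G"
  have XL: "X \<inter> Y \<subseteq> L" using a sub by blast
  have "fip L (insert (X \<inter> Y) G)" unfolding fip_def
  proof (intro allI impI)
    fix H assume H: "finite H \<and> H \<subseteq> insert (X \<inter> Y) G"
    have "L \<inter> \<Inter>(insert X (insert Y (H - {X \<inter> Y}))) \<noteq> {}" by (rule fipD) (use H a in auto)
    moreover have "\<Inter>(insert X (insert Y (H - {X \<inter> Y}))) \<subseteq> \<Inter>H" by blast
    ultimately show "L \<inter> \<Inter>H \<noteq> {}" by blast
  qed
  thus ?thesis using maxi XL by blast
qed

lemma L_in: "L \<in> G"
proof -
  have "fip L (insert L G)" unfolding fip_def
  proof (intro allI impI)
    fix H assume H: "finite H \<and> H \<subseteq> insert L G"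
    have "L \<inter> \<Inter>(H - {L}) \<noteq> {}" by (rule fipD) (use H in auto)
    moreover have "L \<inter> \<Inter>(H - {L}) \<subseteq> L \<inter> \<Inter>H" by blast
    ultimately show "L \<inter> \<Inter>H \<noteq> {}" by blast
  qed
  thus ?thesis using maxi by blast
qed

lemma ultra: "X \<subseteq> L \<Longrightarrow> X \<in> G \<or> L - X \<in> G"
proof (rule ccontr)
  assume X: "X \<subseteq> L" and n: "\<not> (X \<in> G \<or> L - X \<in> G)"
  have "\<not> fip L (insert X G)" using maxi X n by blast
  then obtain H1 where H1: "finite H1" "H1 \<subseteq> insert X G" "L \<inter> \<Inter>H1 = {}"
    unfolding fip_def by blast
  have "\<not> fip L (insert (L - X) G)" using maxi n by blast
  then obtain H2 where H2: "finite H2" "H2 \<subseteq> insert (L - X) G" "L \<inter> \<Inter>H2 = {}"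
    unfolding fip_def by blast
  have "L \<inter> \<Inter>((H1 - {X}) \<union> (H2 - {L - X})) \<noteq> {}" by (rule fipD) (use H1 H2 in auto)
  then obtain z where z: "z \<in> L" "z \<in> \<Inter>((H1 - {X}) \<union> (H2 - {L - X}))" by blast
  show False
  proof (cases "z \<in> X")
    case True
    hence "z \<in> L \<inter> \<Inter>H1" using z by blast
    thus False using H1 by blast
  next
    case False
    hence "z \<in> L \<inter> \<Inter>H2" using z by blast
    thus False using H2 by blast
  qed
qed

definition U :: "'a set \<Rightarrow> real" where "U A = (if A \<subseteq> L \<and> A \<in> G then 1 else 0)"

lemma U_add: "A \<subseteq> L \<Longrightarrow> B \<subseteq> L \<Longrightarrow> A \<inter> B = {} \<Longrightarrow> U (A \<union> B) = U A + U B"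
proof -
  assume that: "A \<subseteq> L" "B \<subseteq> L" "A \<inter> B = {}"
  show ?thesis
  proof (cases "A \<in> G")
    case True
    have "B \<notin> G" using disj[OF True] that(3) by blast
    moreover have "A \<union> B \<in> G" using upward[OF True] that by blast
    ultimately show ?thesis using True that by (simp add: U_def)
  next
    case nA: False
    show ?thesis
    proof (cases "B \<in> G")
      case True
      moreover have "A \<union> B \<in> G" using upward[OF True] that by blast
      ultimately show ?thesis using nA that by (simp add: U_def)
    next
      case False
      have "L - A \<in> G" using ultra[OF that(1)] nA by blast
      moreover have "L - B \<in> G" using ultra[OF that(2)] False by blast
      ultimately have "(L - A) \<inter> (L - B) \<in> G" by (rule inter)
      hence "A \<union> B \<notin> G" using disj by blast
      thus ?thesis using nA False that by (simp add: U_def)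
    qed
  qed
qed

lemma U_fa: "fa_prob L (Pow L) U"
  unfolding fa_prob_def
proof (intro conjI ballI allI impI)
  show "U L = 1" using L_in by (simp add: U_def)
  fix E assume "E \<in> Pow L" thus "0 \<le> U E" by (simp add: U_def)
next
  fix A B assume "A \<in> Pow L" "B \<in> Pow L" "A \<inter> B = {}"
  thus "U (A \<union> B) = U A + U B" using U_add by blast
next
  fix E assume "E \<notin> Pow L" thus "U E = 0" by (simp add: U_def)
qed

end


lemma Pow_inj_fa:
  assumes "infinite K"
  shows "\<exists>\<Phi>. inj_on \<Phi> (Pow K) \<and> (\<forall>B\<in>Pow K. fa_prob K (Pow K) (\<Phi> B))"
proof -
  obtain h where h: "bij_betw h (Fpow K) K" using eqpoll_Fpow[OF assms] unfolding eqpoll_def by blast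
  define L where "L = Fpow K"
  define X where "X a = {F\<in>L. a \<in> F}" for a
  define FB where "FB B = X ` B \<union> (\<lambda>a. L - X a) ` (K - B)" for B
  have injX: "inj_on X K"
  proof (rule inj_onI)
    fix a b assume ab: "a \<in> K" "b \<in> K" "X a = X b"
    have "{a} \<in> X a" using ab(1) by (simp add: X_def L_def Fpow_def)
    hence "{a} \<in> X b" using ab(3) by simp
    thus "a = b" by (simp add: X_def)
  qed
  have XL: "X a \<subseteq> L" for a by (auto simp: X_def)
  have fipB: "fip L (FB B)" if B: "B \<subseteq> K" for B
    unfolding fip_def
  proof (intro allI impI)
    fix H assume H: "finite H \<and> H \<subseteq> FB B"
    define P where "P = {a\<in>B. X a \<in> H}"
    have "P \<subseteq> X -` H \<inter> K" using B by (auto simp: P_def)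
    moreover have "finite (X -` H \<inter> K)"
      using finite_vimage_IntI[of H X K] H injX by blast
    ultimately have fP: "finite P" by (rule finite_subset)
    have "P \<subseteq> K" using B by (auto simp: P_def)
    hence PL: "P \<in> L" using fP by (simp add: L_def Fpow_def)
    have "P \<in> Y" if Y: "Y \<in> H" for Y
    proof -
      have "Y \<in> FB B" using H Y by blast
      then consider a where "a \<in> B" "Y = X a" | a where "a \<in> K - B" "Y = L - X a"
        unfolding FB_def by blast
      thus "P \<in> Y"
      proof cases
        case 1
        hence "a \<in> P" using Y by (simp add: P_def)
        thus ?thesis using 1 PL by (simp add: X_def)
      next
        case 2
        hence "a \<notin> P" by (simp add: P_def)
        thus ?thesis using 2 PL by (simp add: X_def)
      qed
    qed
    thus "L \<inter> \<Inter>H \<noteq> {}" using PL by blast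
  qed
  have FBsub: "FB B \<subseteq> Pow L" for B using XL by (auto simp: FB_def)
  define G where "G B = (SOME G. FB B \<subseteq> G \<and> G \<subseteq> Pow L \<and> fip L G \<and> (\<forall>Y. Y \<subseteq> L \<longrightarrow> fip L (insert Y G) \<longrightarrow> Y \<in> G))" for B
  have G: "FB B \<subseteq> G B \<and> maxfip L (G B)" if "B \<subseteq> K" for B
  proof -
    have "\<exists>G. FB B \<subseteq> G \<and> G \<subseteq> Pow L \<and> fip L G \<and> (\<forall>Y. Y \<subseteq> L \<longrightarrow> fip L (insert Y G) \<longrightarrow> Y \<in> G)"
      using max_fip_exists[OF fipB[OF that] FBsub] .
    hence "FB B \<subseteq> G B \<and> G B \<subseteq> Pow L \<and> fip L (G B) \<and> (\<forall>Y. Y \<subseteq> L \<longrightarrow> fip L (insert Y (G B)) \<longrightarrow> Y \<in> G B)"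
      unfolding G_def by (rule someI_ex)
    thus ?thesis unfolding maxfip_def by blast
  qed
  define \<Phi> where "\<Phi> B = pf L h K (maxfip.U L (G B))" for B
  have hL: "h ` L \<subseteq> K" using h by (auto simp: bij_betw_def L_def)
  have fa: "fa_prob K (Pow K) (\<Phi> B)" if "B \<subseteq> K" for B
  proof -
    have "fa_prob L (Pow L) (maxfip.U L (G B))" using G[OF that] maxfip.U_fa by blast
    thus ?thesis unfolding \<Phi>_def by (rule pf_fa[OF _ hL])
  qed
  have pre: "{x\<in>L. h x \<in> h ` X a} = X a" for a
  proof -
    have "inj_on h L" using h by (simp add: bij_betw_def L_def)
    hence "\<And>x. x \<in> L \<Longrightarrow> h x \<in> h ` X a \<longleftrightarrow> x \<in> X a"
      using inj_on_image_mem_iff[OF _ _ XL] by blast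
    thus ?thesis using XL by blast
  qed
  have key: "\<Phi> B (h ` X a) = (if X a \<in> G B then 1 else 0)" if "B \<subseteq> K" for B a
  proof -
    have "h ` X a \<subseteq> K" using hL XL by blast
    hence "\<Phi> B (h ` X a) = maxfip.U L (G B) {x\<in>L. h x \<in> h ` X a}" unfolding \<Phi>_def pf_def by simp
    also have "\<dots> = maxfip.U L (G B) (X a)" by (simp only: pre)
    also have "\<dots> = (if X a \<subseteq> L \<and> X a \<in> G B then 1 else 0)"
      by (rule maxfip.U_def) (use G[OF that] in blast)
    also have "\<dots> = (if X a \<in> G B then 1 else 0)" using XL by simp
    finally show ?thesis .
  qed
  have incl: "B1 \<subseteq> B2" if B: "B1 \<subseteq> K" "B2 \<subseteq> K" "\<Phi> B1 = \<Phi> B2" for B1 B2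
  proof
    fix a assume a: "a \<in> B1"
    have "X a \<in> FB B1" unfolding FB_def using a by blast
    hence "X a \<in> G B1" using G[OF B(1)] by blast
    hence "\<Phi> B1 (h ` X a) = 1" using key[OF B(1)] by simp
    hence "X a \<in> G B2" using key[OF B(2)] B(3) by (simp split: if_splits)
    show "a \<in> B2"
    proof (rule ccontr)
      assume "a \<notin> B2"
      hence "a \<in> K - B2" using a B(1) by blast
      hence "L - X a \<in> FB B2" unfolding FB_def by blast
      hence "L - X a \<in> G B2" using G[OF B(2)] by blast
      moreover have "maxfip L (G B2)" using G[OF B(2)] by blast
      ultimately have "L \<inter> X a \<inter> (L - X a) \<noteq> {}" using maxfip.disj \<open>X a \<in> G B2\<close> by metis
      thus False by blast
    qed
  qed
  have "inj_on \<Phi> (Pow K)"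
  proof (rule inj_onI)
    fix B1 B2 assume "B1 \<in> Pow K" "B2 \<in> Pow K" "\<Phi> B1 = \<Phi> B2"
    thus "B1 = B2" using incl[of B1 B2] incl[of B2 B1] by auto
  qed
  thus ?thesis using fa by blast
qed

definition FA :: "'a set \<Rightarrow> ('a set \<Rightarrow> real) set" where "FA K = {\<rho>. fa_prob K (Pow K) \<rho>}"

definition dirac :: "'a set \<Rightarrow> 'a \<Rightarrow> 'a set \<Rightarrow> real" where
  "dirac K u = (\<lambda>E. if E \<subseteq> K \<and> u \<in> E then 1 else 0)"

lemma dirac_fa: "u \<in> K \<Longrightarrow> fa_prob K (Pow K) (dirac K u)"
  unfolding fa_prob_def dirac_def by auto

lemma card_contra:
  fixes Ka Kb :: "'v set"
  assumes ga: "inj_on ga (FA Ka)" "ga ` FA Ka \<subseteq> Kb"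
    and gb: "inj_on gb (FA Kb)" "gb ` FA Kb \<subseteq> Ka"
    and uv: "u \<in> Ka" "v \<in> Ka" "u \<noteq> v"
  shows False
proof -
  define r where "r n = (\<lambda>E. if E \<subseteq> Ka then (if u \<in> E then 1 / real (Suc (Suc n)) else 0)
      + (if v \<in> E then 1 - 1 / real (Suc (Suc n)) else 0) else 0)" for n
  have rfa: "r n \<in> FA Ka" for n
  proof -
    have "0 \<le> 1 - 1 / real (Suc (Suc n))" by (simp add: field_simps)
    thus ?thesis unfolding FA_def fa_prob_def r_def using uv by auto
  qed
  have "inj r"
  proof (rule injI)
    fix m n assume "r m = r n"
    hence "r m {u} = r n {u}" by simp
    hence "1 / real (Suc (Suc m)) = 1 / real (Suc (Suc n))" using uv by (simp add: r_def)
    thus "m = n" by simp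
  qed
  hence "infinite (range r)" using range_inj_infinite by blast
  moreover have "range r \<subseteq> FA Ka" using rfa by blast
  ultimately have "infinite (FA Ka)" using infinite_super by blast
  hence "infinite (ga ` FA Ka)" using ga(1) finite_image_iff by blast
  hence infKb: "infinite Kb" using ga(2) infinite_super by blast
  obtain \<Phi> where \<Phi>: "inj_on \<Phi> (Pow Kb)" "\<forall>B\<in>Pow Kb. fa_prob Kb (Pow Kb) (\<Phi> B)"
    using Pow_inj_fa[OF infKb] by blast
  have "Pow Kb \<lesssim> FA Kb" unfolding lepoll_def' using \<Phi> by (auto simp: FA_def)
  also have "FA Kb \<lesssim> Ka" unfolding lepoll_def' using gb by blast
  also have "Ka \<lesssim> FA Ka" unfolding lepoll_def'
  proof (intro exI conjI)
    show "inj_on (dirac Ka) Ka"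
    proof (rule inj_onI)
      fix x y assume xy: "x \<in> Ka" "y \<in> Ka" "dirac Ka x = dirac Ka y"
      hence "dirac Ka x {x} = dirac Ka y {x}" by simp
      thus "x = y" using xy by (simp add: dirac_def split: if_splits)
    qed
    show "dirac Ka \<in> Ka \<rightarrow> FA Ka" using dirac_fa by (auto simp: FA_def)
  qed
  also have "FA Ka \<lesssim> Kb" unfolding lepoll_def' using ga by blast
  finally have "Pow Kb \<lesssim> Kb" .
  thus False using lesspoll_Pow_self[of Kb] by (meson lepoll_iff_leqpoll lesspoll_imp_lepoll lesspoll_trans2 lesspoll_not_refl)
qed


lemma fa_mono_pow:
  assumes "fa_prob A (Pow A) \<mu>" "X \<subseteq> Y" "Y \<subseteq> A"
  shows "\<mu> X \<le> \<mu> Y"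
proof -
  have e: "X \<union> (Y - X) = Y" using assms by blast
  have "\<mu> (X \<union> (Y - X)) = \<mu> X + \<mu> (Y - X)"
    using assms unfolding fa_prob_def by blast
  hence "\<mu> Y = \<mu> X + \<mu> (Y - X)" by (simp only: e)
  moreover have "0 \<le> \<mu> (Y - X)" using assms unfolding fa_prob_def by blast
  ultimately show ?thesis by linarith
qed

lemma fa_one_pow:
  assumes "fa_prob A (Pow A) \<mu>" "X \<subseteq> Y" "Y \<subseteq> A" "\<mu> X = 1"
  shows "\<mu> Y = 1"
proof -
  have "\<mu> X \<le> \<mu> Y" by (rule fa_mono_pow[OF assms(1-3)])
  moreover have "\<mu> Y \<le> \<mu> A" by (rule fa_mono_pow[OF assms(1,3)]) simp
  moreover have "\<mu> A = 1" using assms(1) unfolding fa_prob_def by blast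
  ultimately show ?thesis using assms(4) by linarith
qed

lemma pf_one:
  assumes "fa_prob A (Pow A) \<mu>" "Y \<subseteq> B" "X \<subseteq> A" "\<mu> X = 1" "\<forall>x\<in>X. h x \<in> Y"
  shows "pf A h B \<mu> Y = 1"
proof -
  have "\<mu> {x\<in>A. h x \<in> Y} = 1"
    by (rule fa_one_pow[OF assms(1) _ _ assms(4)]) (use assms in auto)
  thus ?thesis using assms(2) by (simp add: pf_def)
qed

lemma fa_zero_out: "fa_prob A (Pow A) \<mu> \<Longrightarrow> \<not> E \<subseteq> A \<Longrightarrow> \<mu> E = 0"
  unfolding fa_prob_def by blast

definition enc0 :: "'m \<Rightarrow> ('m + 'b) set set" where "enc0 x = {{Inl x}}"
definition enc1 :: "'m \<Rightarrow> ('m + 'b) set set" where "enc1 x = {{Inl x}, {}}"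
definition dec :: "('m + 'b) set set \<Rightarrow> 'm" where "dec z = (SOME x. {Inl x} \<in> z)"

lemma dec_enc0[simp]: "dec (enc0 x) = x"
  unfolding dec_def enc0_def by simp
lemma dec_enc1[simp]: "dec (enc1 x) = x"
  unfolding dec_def enc1_def by simp
lemma enc_e1[simp]: "{} \<in> enc1 x" by (simp add: enc1_def)
lemma enc_e0[simp]: "{} \<notin> enc0 x" by (simp add: enc0_def)
lemma enc0_inj[simp]: "enc0 x = enc0 y \<longleftrightarrow> x = y"
  unfolding enc0_def by simp
lemma enc1_inj[simp]: "enc1 x = enc1 y \<longleftrightarrow> x = y"
  unfolding enc1_def by (simp add: doubleton_eq_iff)
lemma enc01[simp]: "enc0 x \<noteq> enc1 y" "enc1 y \<noteq> enc0 x"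
  using enc_e0 enc_e1 by metis+

locale su =
  fixes I :: "'i set" and S :: "'s set" and M :: "'m set" and T :: "'i \<Rightarrow> 'm \<Rightarrow> 'm set \<Rightarrow> real"
    and \<theta> :: "'m \<Rightarrow> 's" and tb :: "'b itself"
  assumes U: "star_universal_wrt TYPE(('m + 'b) set set) I S M T \<theta>"
begin

lemma sp: "star_type_space I S M T \<theta>" using U unfolding star_universal_wrt_def by blast

lemma Mne: "M \<noteq> {}" using sp unfolding star_type_space_def by blast
lemma Tfa: "i \<in> I \<Longrightarrow> x \<in> M \<Longrightarrow> fa_prob M (Pow M) (T i x)"
  using sp unfolding star_type_space_def by blast
lemma Tintro: "i \<in> I \<Longrightarrow> x \<in> M \<Longrightarrow> T i x {m'\<in>M. T i m' = T i x} = 1"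
  using sp unfolding star_type_space_def by blast
lemma \<theta>S: "x \<in> M \<Longrightarrow> \<theta> x \<in> S"
  using sp unfolding star_type_space_def by blast

lemma ex_morph:
  fixes Z :: "('m + 'b) set set set"
  assumes "star_type_space I S Z T' \<theta>'"
  shows "\<exists>f. type_morphism I Z (Pow Z) T' \<theta>' M (Pow M) T \<theta> f"
  using U assms unfolding star_universal_wrt_def by blast

lemma uq_morph:
  fixes Z :: "('m + 'b) set set set"
  assumes "star_type_space I S Z T' \<theta>'"
    "type_morphism I Z (Pow Z) T' \<theta>' M (Pow M) T \<theta> f"
    "type_morphism I Z (Pow Z) T' \<theta>' M (Pow M) T \<theta> g"
    "z \<in> Z"
  shows "f z = g z"
  using U assms unfolding star_universal_wrt_def by blast

definition Zs :: "'m set \<Rightarrow> ('m + 'b) set set set" where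
  "Zs L = enc0 ` M \<union> enc1 ` L"

definition Ts :: "'i \<Rightarrow> 'm set \<Rightarrow> ('m set \<Rightarrow> real) \<Rightarrow> 'i \<Rightarrow> ('m + 'b) set set \<Rightarrow> ('m + 'b) set set set \<Rightarrow> real" where
  "Ts a L \<nu> i z = (if {} \<in> z \<and> i = a then pf L enc1 (Zs L) \<nu> else pf M enc0 (Zs L) (T i (dec z)))"

definition \<theta>s :: "('m + 'b) set set \<Rightarrow> 's" where "\<theta>s z = \<theta> (dec z)"

lemma Ts0[simp]: "Ts a L \<nu> i (enc0 x) = pf M enc0 (Zs L) (T i x)"
  by (simp add: Ts_def)
lemma Ts1a[simp]: "Ts a L \<nu> a (enc1 x) = pf L enc1 (Zs L) \<nu>"
  by (simp add: Ts_def)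
lemma Ts1[simp]: "i \<noteq> a \<Longrightarrow> Ts a L \<nu> i (enc1 x) = pf M enc0 (Zs L) (T i x)"
  by (simp add: Ts_def)

lemma Zs_cases: "z \<in> Zs L \<Longrightarrow> (\<And>x. x \<in> M \<Longrightarrow> z = enc0 x \<Longrightarrow> P) \<Longrightarrow> (\<And>x. x \<in> L \<Longrightarrow> z = enc1 x \<Longrightarrow> P) \<Longrightarrow> P"
  unfolding Zs_def by blast

lemma Zs_space:
  assumes L: "L \<subseteq> M" and \<nu>: "L = {} \<or> fa_prob L (Pow L) \<nu>"
  shows "star_type_space I S (Zs L) (Ts a L \<nu>) \<theta>s"
  unfolding star_type_space_def
proof (intro conjI ballI)
  show "Zs L \<noteq> {}" using Mne by (auto simp: Zs_def)
next
  have e0: "enc0 ` M \<subseteq> Zs L" and e1: "enc1 ` L \<subseteq> Zs L" by (auto simp: Zs_def)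
  fix i z assume i: "i \<in> I" and z: "z \<in> Zs L"
  show "fa_prob (Zs L) (Pow (Zs L)) (Ts a L \<nu> i z)"
  proof (rule Zs_cases[OF z])
    fix x assume "x \<in> M" "z = enc0 x"
    thus ?thesis using pf_fa[OF Tfa[OF i] e0] by simp
  next
    fix x assume x: "x \<in> L" "z = enc1 x"
    hence fa: "fa_prob L (Pow L) \<nu>" using \<nu> by blast
    show ?thesis
    proof (cases "i = a")
      case True thus ?thesis using x pf_fa[OF fa e1] by simp
    next
      case False thus ?thesis using x L pf_fa[OF Tfa[OF i] e0] by auto
    qed
  qed
  show "Ts a L \<nu> i z {m' \<in> Zs L. Ts a L \<nu> i m' = Ts a L \<nu> i z} = 1"
  proof (rule Zs_cases[OF z])
    fix x assume x: "x \<in> M" "z = enc0 x"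
    show ?thesis unfolding x(2) Ts0
      by (rule pf_one[OF Tfa[OF i x(1)] _ _ Tintro[OF i x(1)]]) (auto simp: Zs_def)
  next
    fix x assume x: "x \<in> L" "z = enc1 x"
    hence fa: "fa_prob L (Pow L) \<nu>" using \<nu> by blast
    have fL: "\<nu> L = 1" using fa unfolding fa_prob_def by blast
    show ?thesis
    proof (cases "i = a")
      case True
      show ?thesis unfolding x(2) True Ts1a
        by (rule pf_one[OF fa _ _ fL]) (auto simp: Zs_def)
    next
      case False
      have xM: "x \<in> M" using x L by blast
      show ?thesis unfolding x(2) Ts1[OF False]
        by (rule pf_one[OF Tfa[OF i xM] _ _ Tintro[OF i xM]]) (use False in \<open>auto simp: Zs_def\<close>)
    qed
  qed
next
  fix z assume "z \<in> Zs L"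
  thus "\<theta>s z \<in> S" by (rule Zs_cases) (use L in \<open>auto simp: \<theta>s_def intro: \<theta>S\<close>)
qed

lemma dec_morph: "type_morphism I (Zs {}) (Pow (Zs {})) (Ts a {} \<nu>) \<theta>s M (Pow M) T \<theta> dec"
  unfolding type_morphism_def meas_def
proof (intro conjI ballI)
  fix z assume "z \<in> Zs {}" thus "dec z \<in> M" by (auto simp: Zs_def)
next
  fix E show "{x \<in> Zs {}. dec x \<in> E} \<in> Pow (Zs {})" by blast
next
  fix z show "\<theta>s z = \<theta> (dec z)" by (simp add: \<theta>s_def)
next
  fix i z E assume i: "i \<in> I" and z: "z \<in> Zs {}" and E: "E \<in> Pow M"
  then obtain x where x: "x \<in> M" "z = enc0 x" by (auto simp: Zs_def)
  have "{w\<in>M. enc0 w \<in> {x \<in> Zs {}. dec x \<in> E}} = E" using E by (auto simp: Zs_def)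
  thus "T i (dec z) E = Ts a {} \<nu> i z {x \<in> Zs {}. dec x \<in> E}"
    using x by (simp add: pf_def)
qed

lemma restrict_morph:
  assumes L: "L \<subseteq> M" and f: "type_morphism I (Zs L) (Pow (Zs L)) (Ts a L \<nu>) \<theta>s M (Pow M) T \<theta> f"
  shows "type_morphism I (Zs {}) (Pow (Zs {})) (Ts a {} \<nu>') \<theta>s M (Pow M) T \<theta> f"
  unfolding type_morphism_def meas_def
proof (intro conjI ballI)
  have sub: "Zs {} \<subseteq> Zs L" by (auto simp: Zs_def)
  fix z assume "z \<in> Zs {}" thus "f z \<in> M" using f sub unfolding type_morphism_def meas_def by blast
next
  fix E show "{x \<in> Zs {}. f x \<in> E} \<in> Pow (Zs {})" by blast
next
  have sub: "Zs {} \<subseteq> Zs L" by (auto simp: Zs_def)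
  fix z assume "z \<in> Zs {}" thus "\<theta>s z = \<theta> (f z)" using f sub unfolding type_morphism_def by blast
next
  fix i z E assume i: "i \<in> I" and z: "z \<in> Zs {}" and E: "E \<in> Pow M"
  then obtain x where x: "x \<in> M" "z = enc0 x" by (auto simp: Zs_def)
  have zL: "z \<in> Zs L" using x by (auto simp: Zs_def)
  have "T i (f z) E = Ts a L \<nu> i z {x \<in> Zs L. f x \<in> E}"
    using f i zL E unfolding type_morphism_def by blast
  also have "\<dots> = T i x {w\<in>M. enc0 w \<in> {x \<in> Zs L. f x \<in> E}}" using x by (simp add: pf_def)
  also have "{w\<in>M. enc0 w \<in> {x \<in> Zs L. f x \<in> E}} = {w\<in>M. enc0 w \<in> {x \<in> Zs {}. f x \<in> E}}"
    by (auto simp: Zs_def)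
  also have "T i x \<dots> = Ts a {} \<nu>' i z {x \<in> Zs {}. f x \<in> E}" using x by (simp add: pf_def)
  finally show "T i (f z) E = Ts a {} \<nu>' i z {x \<in> Zs {}. f x \<in> E}" .
qed

lemma fix_copy:
  assumes L: "L \<subseteq> M" and f: "type_morphism I (Zs L) (Pow (Zs L)) (Ts a L \<nu>) \<theta>s M (Pow M) T \<theta> f"
    and x: "x \<in> M"
  shows "f (enc0 x) = x"
proof -
  have sp0: "star_type_space I S (Zs {}) (Ts a {} \<nu>) \<theta>s" by (rule Zs_space) auto
  have m1: "type_morphism I (Zs {}) (Pow (Zs {})) (Ts a {} \<nu>) \<theta>s M (Pow M) T \<theta> f"
    by (rule restrict_morph[OF L f])
  have xz: "enc0 x \<in> Zs {}" using x by (simp add: Zs_def)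
  have "f (enc0 x) = dec (enc0 x :: ('m + 'b) set set)"
    by (rule uq_morph[OF sp0 m1 dec_morph xz])
  thus ?thesis by simp
qed


lemma realize:
  assumes a: "a \<in> I" and \<nu>: "fa_prob M (Pow M) \<nu>"
    and f: "type_morphism I (Zs M) (Pow (Zs M)) (Ts a M \<nu>) \<theta>s M (Pow M) T \<theta> f"
    and w: "w \<in> M"
  shows "f (enc1 w) \<in> M" "\<theta> (f (enc1 w)) = \<theta> w"
    "\<And>j. j \<in> I \<Longrightarrow> j \<noteq> a \<Longrightarrow> T j (f (enc1 w)) = T j w"
    "\<And>E. E \<subseteq> M \<Longrightarrow> T a (f (enc1 w)) E = \<nu> {u\<in>M. f (enc1 u) \<in> E}"
proof -
  have wz: "enc1 w \<in> Zs M" using w by (simp add: Zs_def)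
  show fM: "f (enc1 w) \<in> M" using f wz unfolding type_morphism_def meas_def by blast
  have "\<theta>s (enc1 w) = \<theta> (f (enc1 w))" using f wz unfolding type_morphism_def by blast
  thus "\<theta> (f (enc1 w)) = \<theta> w" by (simp add: \<theta>s_def)
  have mT: "T i (f (enc1 w)) E = Ts a M \<nu> i (enc1 w) {x \<in> Zs M. f x \<in> E}" if "i \<in> I" "E \<subseteq> M" for i E
    using f wz that unfolding type_morphism_def by blast
  fix j assume j: "j \<in> I" "j \<noteq> a"
  show "T j (f (enc1 w)) = T j w"
  proof
    fix E show "T j (f (enc1 w)) E = T j w E"
    proof (cases "E \<subseteq> M")
      case True
      have "T j (f (enc1 w)) E = T j w {u\<in>M. enc0 u \<in> {x \<in> Zs M. f x \<in> E}}"
        using mT[OF j(1) True] j(2) by (simp add: pf_def)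
      also have "{u\<in>M. enc0 u \<in> {x \<in> Zs M. f x \<in> E}} = E"
      proof -
        have "\<And>u. u \<in> M \<Longrightarrow> f (enc0 u) = u" using fix_copy[OF _ f] by blast
        thus ?thesis using True by (auto simp: Zs_def)
      qed
      finally show ?thesis .
    next
      case False
      thus ?thesis using fa_zero_out[OF Tfa[OF j(1) fM]] fa_zero_out[OF Tfa[OF j(1) w]] by simp
    qed
  qed
next
  have wz: "enc1 w \<in> Zs M" using w by (simp add: Zs_def)
  fix E assume E: "E \<subseteq> M"
  have "T a (f (enc1 w)) E = Ts a M \<nu> a (enc1 w) {x \<in> Zs M. f x \<in> E}"
    using f wz a E unfolding type_morphism_def by blast
  also have "\<dots> = \<nu> {u\<in>M. enc1 u \<in> {x \<in> Zs M. f x \<in> E}}" by (simp add: pf_def)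
  also have "{u\<in>M. enc1 u \<in> {x \<in> Zs M. f x \<in> E}} = {u\<in>M. f (enc1 u) \<in> E}" by (auto simp: Zs_def)
  finally show "T a (f (enc1 w)) E = \<nu> {u\<in>M. f (enc1 u) \<in> E}" .
qed

definition kk :: "'i \<Rightarrow> 'm \<Rightarrow> 's \<times> ('i \<Rightarrow> 'm set \<Rightarrow> real)" where
  "kk a x = (\<theta> x, \<lambda>j. if j \<in> I \<and> j \<noteq> a then T j x else (\<lambda>_. 0))"

lemma realize2:
  assumes a: "a \<in> I" and \<rho>: "\<rho> \<in> FA (kk a ` M)"
  shows "\<exists>y\<in>M. \<forall>W. W \<subseteq> kk a ` M \<longrightarrow> T a y {u\<in>M. kk a u \<in> W} = \<rho> W"
proof -
  define K where "K = kk a ` M"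
  define r where "r = inv_into M (kk a)"
  have rK: "r ` K \<subseteq> M" unfolding r_def K_def by (auto intro: inv_into_into)
  have kr: "kk a (r v) = v" if "v \<in> K" for v using that unfolding r_def K_def by (simp add: f_inv_into_f)
  define \<nu> where "\<nu> = pf K r M \<rho>"
  have \<nu>fa: "fa_prob M (Pow M) \<nu>" unfolding \<nu>_def
    by (rule pf_fa[OF _ rK]) (use \<rho> in \<open>simp add: FA_def K_def\<close>)
  have "star_type_space I S (Zs M) (Ts a M \<nu>) \<theta>s" by (rule Zs_space) (use \<nu>fa in auto)
  then obtain f where f: "type_morphism I (Zs M) (Pow (Zs M)) (Ts a M \<nu>) \<theta>s M (Pow M) T \<theta> f"
    using ex_morph by blast
  obtain w0 where w0: "w0 \<in> M" using Mne by blast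
  have kf: "kk a (f (enc1 u)) = kk a u" if "u \<in> M" for u
    using realize(2,3)[OF a \<nu>fa f that] by (auto simp: kk_def)
  show ?thesis
  proof (intro bexI allI impI)
    show "f (enc1 w0) \<in> M" by (rule realize(1)[OF a \<nu>fa f w0])
    fix W assume W: "W \<subseteq> kk a ` M"
    have "T a (f (enc1 w0)) {u\<in>M. kk a u \<in> W} = \<nu> {u\<in>M. f (enc1 u) \<in> {u\<in>M. kk a u \<in> W}}"
      by (rule realize(4)[OF a \<nu>fa f w0]) blast
    also have "{u\<in>M. f (enc1 u) \<in> {u\<in>M. kk a u \<in> W}} = {u\<in>M. kk a u \<in> W}"
      using kf realize(1)[OF a \<nu>fa f] by auto
    also have "\<nu> {u\<in>M. kk a u \<in> W} = \<rho> {v\<in>K. r v \<in> {u\<in>M. kk a u \<in> W}}"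
      by (simp add: \<nu>_def pf_def)
    also have "{v\<in>K. r v \<in> {u\<in>M. kk a u \<in> W}} = W"
    proof (rule subset_antisym)
      have WK: "W \<subseteq> K" using W unfolding K_def .
      show "{v\<in>K. r v \<in> {u\<in>M. kk a u \<in> W}} \<subseteq> W"
      proof
        fix v assume "v \<in> {v\<in>K. r v \<in> {u\<in>M. kk a u \<in> W}}"
        hence "v \<in> K" "kk a (r v) \<in> W" by blast+
        thus "v \<in> W" using kr by metis
      qed
      show "W \<subseteq> {v\<in>K. r v \<in> {u\<in>M. kk a u \<in> W}}"
      proof
        fix v assume v: "v \<in> W"
        hence vK: "v \<in> K" using WK by blast
        hence "r v \<in> M" using rK by blast
        moreover have "kk a (r v) \<in> W" using kr[OF vK] v by simp
        ultimately show "v \<in> {v\<in>K. r v \<in> {u\<in>M. kk a u \<in> W}}" using vK by blast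
      qed
    qed
    finally show "T a (f (enc1 w0)) {u\<in>M. kk a u \<in> W} = \<rho> W" .
  qed
qed

lemma inj_part:
  assumes a: "a \<in> I" and b: "b \<in> I" and ab: "a \<noteq> b"
  shows "\<exists>g. inj_on g (FA (kk a ` M)) \<and> g ` FA (kk a ` M) \<subseteq> kk b ` M"
proof -
  define K where "K = kk a ` M"
  define y where "y \<rho> = (SOME y. y\<in>M \<and> (\<forall>W. W \<subseteq> K \<longrightarrow> T a y {u\<in>M. kk a u \<in> W} = \<rho> W))" for \<rho>
  have y: "y \<rho> \<in> M \<and> (\<forall>W. W \<subseteq> K \<longrightarrow> T a (y \<rho>) {u\<in>M. kk a u \<in> W} = \<rho> W)" if "\<rho> \<in> FA K" for \<rho>
  proof -
    have "\<exists>y. y\<in>M \<and> (\<forall>W. W \<subseteq> K \<longrightarrow> T a y {u\<in>M. kk a u \<in> W} = \<rho> W)"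
      using realize2[OF a] that unfolding K_def by blast
    thus ?thesis unfolding y_def by (rule someI_ex)
  qed
  show ?thesis
  proof (intro exI conjI)
    show "(\<lambda>\<rho>. kk b (y \<rho>)) ` FA (kk a ` M) \<subseteq> kk b ` M" using y unfolding K_def by blast
    show "inj_on (\<lambda>\<rho>. kk b (y \<rho>)) (FA (kk a ` M))"
    proof (rule inj_onI)
      fix \<rho>1 \<rho>2 assume r: "\<rho>1 \<in> FA (kk a ` M)" "\<rho>2 \<in> FA (kk a ` M)" "kk b (y \<rho>1) = kk b (y \<rho>2)"
      have "snd (kk b (y \<rho>1)) a = snd (kk b (y \<rho>2)) a" using r(3) by simp
      hence Teq: "T a (y \<rho>1) = T a (y \<rho>2)" using a ab by (simp add: kk_def)
      show "\<rho>1 = \<rho>2"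
      proof
        fix W show "\<rho>1 W = \<rho>2 W"
        proof (cases "W \<subseteq> K")
          case True
          have "\<rho>1 \<in> FA K" "\<rho>2 \<in> FA K" using r unfolding K_def by blast+
          hence e1: "T a (y \<rho>1) {u\<in>M. kk a u \<in> W} = \<rho>1 W"
            and e2: "T a (y \<rho>2) {u\<in>M. kk a u \<in> W} = \<rho>2 W" using y True by blast+
          show ?thesis using e1 e2 Teq by simp
        next
          case False
          have "fa_prob K (Pow K) \<rho>1" "fa_prob K (Pow K) \<rho>2" using r by (auto simp: FA_def K_def)
          thus ?thesis using fa_zero_out[of K \<rho>1 W] fa_zero_out[of K \<rho>2 W] False by simp
        qed
      qed
    qed
  qed
qed

lemma two_states:
  assumes s: "s \<in> S"
  shows "\<exists>x\<in>M. \<theta> x = s"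
proof -
  define P :: "('m + 'b) set set set" where "P = {{}}"
  define Tp where "Tp = (\<lambda>(i::'i) (z::('m + 'b) set set). dirac P {})"
  have "star_type_space I S P Tp (\<lambda>_. s)"
    unfolding star_type_space_def
  proof (intro conjI ballI)
    show "P \<noteq> {}" by (simp add: P_def)
    fix i z assume "i \<in> I" "z \<in> P"
    show "fa_prob P (Pow P) (Tp i z)" unfolding Tp_def by (rule dirac_fa) (simp add: P_def)
    show "Tp i z {m' \<in> P. Tp i m' = Tp i z} = 1" by (simp add: Tp_def dirac_def P_def)
  next
    fix z show "s \<in> S" by (rule s)
  qed
  then obtain f where f: "type_morphism I P (Pow P) Tp (\<lambda>_. s) M (Pow M) T \<theta> f" using ex_morph by blast
  have "({}::('m + 'b) set set) \<in> P" by (simp add: P_def)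
  hence "f {} \<in> M" "s = \<theta> (f {})" using f unfolding type_morphism_def meas_def by blast+
  thus ?thesis by metis
qed

theorem star_main:
  assumes "\<exists>i j. i \<in> I \<and> j \<in> I \<and> i \<noteq> j" and "\<exists>s t. s \<in> S \<and> t \<in> S \<and> s \<noteq> t"
  shows False
proof -
  obtain a b where ab: "a \<in> I" "b \<in> I" "a \<noteq> b" using assms(1) by blast
  obtain s t where st: "s \<in> S" "t \<in> S" "s \<noteq> t" using assms(2) by blast
  obtain x0 where x0: "x0 \<in> M" "\<theta> x0 = s" using two_states[OF st(1)] by blast
  obtain x1 where x1: "x1 \<in> M" "\<theta> x1 = t" using two_states[OF st(2)] by blast
  obtain ga where ga: "inj_on ga (FA (kk a ` M))" "ga ` FA (kk a ` M) \<subseteq> kk b ` M"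
    using inj_part[OF ab] by blast
  obtain gb where gb: "inj_on gb (FA (kk b ` M))" "gb ` FA (kk b ` M) \<subseteq> kk a ` M"
    using inj_part[OF ab(2,1)] ab(3) by metis
  have "kk a x0 \<noteq> kk a x1" using x0 x1 st(3) by (simp add: kk_def)
  moreover have "kk a x0 \<in> kk a ` M" "kk a x1 \<in> kk a ` M" using x0 x1 by auto
  ultimately show False using card_contra[OF ga gb] by blast
qed

end


lemma inf_fieldD:
  assumes "inf_field M \<Sigma>"
  shows "\<Sigma> \<subseteq> Pow M" "M \<in> \<Sigma>" "\<And>A. A \<in> \<Sigma> \<Longrightarrow> M - A \<in> \<Sigma>"
    "\<And>A B. A \<in> \<Sigma> \<Longrightarrow> B \<in> \<Sigma> \<Longrightarrow> A \<union> B \<in> \<Sigma>"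
    "\<And>F. F \<subseteq> \<Sigma> \<Longrightarrow> F \<noteq> {} \<Longrightarrow> \<Inter>F \<in> \<Sigma>"
  using assms unfolding inf_field_def field_of_sets_def by blast+

lemma inf_fieldI:
  assumes "\<Sigma> \<subseteq> Pow M" "M \<in> \<Sigma>" "\<And>A. A \<in> \<Sigma> \<Longrightarrow> M - A \<in> \<Sigma>"
    "\<And>A B. A \<in> \<Sigma> \<Longrightarrow> B \<in> \<Sigma> \<Longrightarrow> A \<union> B \<in> \<Sigma>"
    "\<And>F. F \<subseteq> \<Sigma> \<Longrightarrow> F \<noteq> {} \<Longrightarrow> \<Inter>F \<in> \<Sigma>"
  shows "inf_field M \<Sigma>"
  using assms unfolding inf_field_def field_of_sets_def by blast

lemma inf_field_Pow: "inf_field M (Pow M)"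
  by (rule inf_fieldI) auto

lemma gen_inf_field:
  assumes "G \<subseteq> Pow N"
  shows "inf_field N (inf_field_generated N G)"
proof -
  define \<FF> where "\<FF> = {\<Sigma>. inf_field N \<Sigma> \<and> G \<subseteq> \<Sigma>}"
  have P: "Pow N \<in> \<FF>" using assms inf_field_Pow by (simp add: \<FF>_def)
  have eq: "inf_field_generated N G = \<Inter>\<FF>" by (simp add: inf_field_generated_def \<FF>_def)
  show ?thesis unfolding eq
  proof (rule inf_fieldI)
    show "\<Inter>\<FF> \<subseteq> Pow N" using P by blast
    show "N \<in> \<Inter>\<FF>" by (auto simp: \<FF>_def dest: inf_fieldD(2))
    fix A assume "A \<in> \<Inter>\<FF>" thus "N - A \<in> \<Inter>\<FF>" by (auto simp: \<FF>_def dest: inf_fieldD(3))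
  next
    fix A B assume "A \<in> \<Inter>\<FF>" "B \<in> \<Inter>\<FF>" thus "A \<union> B \<in> \<Inter>\<FF>" by (auto simp: \<FF>_def dest: inf_fieldD(4))
  next
    fix F assume F: "F \<subseteq> \<Inter>\<FF>" "F \<noteq> {}"
    show "\<Inter>F \<in> \<Inter>\<FF>"
    proof
      fix \<Sigma> assume "\<Sigma> \<in> \<FF>"
      hence "inf_field N \<Sigma>" "F \<subseteq> \<Sigma>" using F by (auto simp: \<FF>_def)
      thus "\<Inter>F \<in> \<Sigma>" using inf_fieldD(5) F(2) by blast
    qed
  qed
qed

lemma gen_sub: "G \<subseteq> inf_field_generated N G"
  unfolding inf_field_generated_def by blast

lemma meas_gen:
  assumes \<Sigma>: "inf_field M \<Sigma>" and G: "G \<subseteq> Pow N" and g: "\<forall>x\<in>M. g x \<in> N"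
    and pre: "\<forall>E\<in>G. {x\<in>M. g x \<in> E} \<in> \<Sigma>"
    and D: "D \<in> inf_field_generated N G"
  shows "{x\<in>M. g x \<in> D} \<in> \<Sigma>"
proof -
  define \<DD> where "\<DD> = {D. D \<subseteq> N \<and> {x\<in>M. g x \<in> D} \<in> \<Sigma>}"
  have "inf_field N \<DD>"
  proof (rule inf_fieldI)
    show "\<DD> \<subseteq> Pow N" by (auto simp: \<DD>_def)
    have "{x\<in>M. g x \<in> N} = M" using g by blast
    thus "N \<in> \<DD>" using inf_fieldD(2)[OF \<Sigma>] by (simp add: \<DD>_def)
  next
    fix A assume A: "A \<in> \<DD>"
    have "{x\<in>M. g x \<in> N - A} = M - {x\<in>M. g x \<in> A}" using g by blast
    thus "N - A \<in> \<DD>" using A inf_fieldD(3)[OF \<Sigma>] by (simp add: \<DD>_def)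
  next
    fix A B assume AB: "A \<in> \<DD>" "B \<in> \<DD>"
    have "{x\<in>M. g x \<in> A \<union> B} = {x\<in>M. g x \<in> A} \<union> {x\<in>M. g x \<in> B}" by blast
    thus "A \<union> B \<in> \<DD>" using AB inf_fieldD(4)[OF \<Sigma>] by (simp add: \<DD>_def)
  next
    fix F assume F: "F \<subseteq> \<DD>" "F \<noteq> {}"
    have eq: "{x\<in>M. g x \<in> \<Inter>F} = \<Inter>((\<lambda>D. {x\<in>M. g x \<in> D}) ` F)" using F(2) by blast
    have "\<Inter>((\<lambda>D. {x\<in>M. g x \<in> D}) ` F) \<in> \<Sigma>"
      by (rule inf_fieldD(5)[OF \<Sigma>]) (use F in \<open>auto simp: \<DD>_def\<close>)
    moreover have "\<Inter>F \<subseteq> N" using F by (auto simp: \<DD>_def)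
    ultimately show "\<Inter>F \<in> \<DD>" using eq by (simp add: \<DD>_def)
  qed
  moreover have "G \<subseteq> \<DD>" using G pre by (auto simp: \<DD>_def)
  ultimately have "inf_field_generated N G \<subseteq> \<DD>" unfolding inf_field_generated_def by blast
  thus ?thesis using D by (auto simp: \<DD>_def)
qed

lemma fa_compl:
  assumes \<Sigma>: "inf_field M \<Sigma>" and \<mu>: "fa_prob M \<Sigma> \<mu>" and A: "A \<in> \<Sigma>"
  shows "\<mu> (M - A) = 1 - \<mu> A" "0 \<le> \<mu> A" "\<mu> A \<le> 1"
proof -
  have AM: "A \<subseteq> M" using A inf_fieldD(1)[OF \<Sigma>] by blast
  have cA: "M - A \<in> \<Sigma>" using A inf_fieldD(3)[OF \<Sigma>] by blast
  have e: "A \<union> (M - A) = M" using AM by blast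
  have "\<mu> (A \<union> (M - A)) = \<mu> A + \<mu> (M - A)" using \<mu> A cA unfolding fa_prob_def by blast
  hence s: "\<mu> A + \<mu> (M - A) = 1" using \<mu> unfolding e fa_prob_def by simp
  have "0 \<le> \<mu> (M - A)" "0 \<le> \<mu> A" using \<mu> A cA unfolding fa_prob_def by blast+
  with s show "\<mu> (M - A) = 1 - \<mu> A" "0 \<le> \<mu> A" "\<mu> A \<le> 1" by linarith+
qed

lemma singleton_Delta_field:
  assumes \<Sigma>: "inf_field M \<Sigma>" and \<mu>: "\<mu> \<in> Delta M \<Sigma>"
  shows "{\<mu>} \<in> Delta_field M \<Sigma>"
proof -
  define Gen where "Gen = {{\<nu>\<in>Delta M \<Sigma>. \<nu> E \<ge> p} | E p. E \<in> \<Sigma> \<and> 0 \<le> p \<and> p \<le> 1}"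
  have DF: "Delta_field M \<Sigma> = inf_field_generated (Delta M \<Sigma>) Gen" by (simp add: Delta_field_def Gen_def)
  have GP: "Gen \<subseteq> Pow (Delta M \<Sigma>)" by (auto simp: Gen_def)
  have \<mu>fa: "fa_prob M \<Sigma> \<mu>" using \<mu> by (simp add: Delta_def)
  define F where "F = (\<lambda>E. {\<nu>\<in>Delta M \<Sigma>. \<nu> E \<ge> \<mu> E}) ` \<Sigma>"
  have FG: "F \<subseteq> Gen"
  proof
    fix X assume "X \<in> F"
    then obtain E where E: "E \<in> \<Sigma>" "X = {\<nu>\<in>Delta M \<Sigma>. \<nu> E \<ge> \<mu> E}" by (auto simp: F_def)
    have "0 \<le> \<mu> E" "\<mu> E \<le> 1" using fa_compl[OF \<Sigma> \<mu>fa E(1)] by auto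
    thus "X \<in> Gen" using E unfolding Gen_def by blast
  qed
  have Fne: "F \<noteq> {}" using inf_fieldD(2)[OF \<Sigma>] by (auto simp: F_def)
  have "\<Inter>F \<in> Delta_field M \<Sigma>"
    unfolding DF by (rule inf_fieldD(5)[OF gen_inf_field[OF GP]]) (use FG gen_sub Fne in blast)+
  moreover have "\<Inter>F = {\<mu>}"
  proof
    show "{\<mu>} \<subseteq> \<Inter>F" using \<mu> by (auto simp: F_def)
    show "\<Inter>F \<subseteq> {\<mu>}"
    proof
      fix \<nu> assume \<nu>: "\<nu> \<in> \<Inter>F"
      have ge: "\<nu> E \<ge> \<mu> E" and \<nu>D: "\<nu> \<in> Delta M \<Sigma>" if "E \<in> \<Sigma>" for E using \<nu> that by (auto simp: F_def)
      have \<nu>D: "\<nu> \<in> Delta M \<Sigma>" using \<nu>D inf_fieldD(2)[OF \<Sigma>] by blast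
      have \<nu>fa: "fa_prob M \<Sigma> \<nu>" using \<nu>D by (simp add: Delta_def)
      have "\<nu> E = \<mu> E" for E
      proof (cases "E \<in> \<Sigma>")
        case True
        have c: "M - E \<in> \<Sigma>" using True inf_fieldD(3)[OF \<Sigma>] by blast
        have "\<nu> (M - E) \<ge> \<mu> (M - E)" using ge[OF c] .
        hence "\<nu> E \<le> \<mu> E" using fa_compl(1)[OF \<Sigma> \<nu>fa True] fa_compl(1)[OF \<Sigma> \<mu>fa True] by linarith
        thus ?thesis using ge[OF True] by linarith
      next
        case False thus ?thesis using \<nu>fa \<mu>fa unfolding fa_prob_def by metis
      qed
      thus "\<nu> \<in> {\<mu>}" by auto
    qed
  qed
  ultimately show ?thesis by simp
qed

lemma inf_to_star: "inf_type_space I S M (Pow M) T \<theta> \<Longrightarrow> star_type_space I S M T \<theta>"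
  unfolding inf_type_space_def star_type_space_def meas_def Delta_def by blast

lemma star_to_inf:
  assumes "star_type_space I S M T \<theta>"
  shows "inf_type_space I S M (Pow M) T \<theta>"
  unfolding inf_type_space_def
proof (intro conjI ballI impI)
  show "M \<noteq> {}" using assms unfolding star_type_space_def by blast
  show "inf_field M (Pow M)" by (rule inf_field_Pow)
  show "meas M (Pow M) S (Pow S) \<theta>" using assms unfolding star_type_space_def meas_def by blast
  fix i assume i: "i \<in> I"
  show "meas M (Pow M) (Delta M (Pow M)) (Delta_field M (Pow M)) (T i)"
    using assms i unfolding star_type_space_def meas_def Delta_def by blast
  fix m A assume m: "m \<in> M" and A: "A \<in> Pow M" and sub: "{m' \<in> M. T i m' = T i m} \<subseteq> A"
  have "fa_prob M (Pow M) (T i m)" "T i m {m' \<in> M. T i m' = T i m} = 1"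
    using assms i m unfolding star_type_space_def by blast+
  thus "T i m A = 1" using fa_one_pow sub A by blast
qed

lemma inf_Pow_to_star:
  assumes "inf_universal_wrt TYPE('c) I S M (Pow M) T \<theta>"
  shows "star_universal_wrt TYPE('c) I S M T \<theta>"
  using assms inf_to_star star_to_inf
  unfolding inf_universal_wrt_def star_universal_wrt_def by metis


lemma transport_inf_field:
  assumes e: "inj e" and \<Sigma>: "inf_field M \<Sigma>"
  shows "inf_field (e ` M) ((`) e ` \<Sigma>)"
proof (rule inf_fieldI)
  show "(`) e ` \<Sigma> \<subseteq> Pow (e ` M)" using inf_fieldD(1)[OF \<Sigma>] by blast
  show "e ` M \<in> (`) e ` \<Sigma>" using inf_fieldD(2)[OF \<Sigma>] by blast
next
  fix X assume "X \<in> (`) e ` \<Sigma>"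
  then obtain A where A: "A \<in> \<Sigma>" "X = e ` A" by blast
  have "e ` M - e ` A = e ` (M - A)" using e by (simp add: image_set_diff)
  moreover have "M - A \<in> \<Sigma>" using A inf_fieldD(3)[OF \<Sigma>] by blast
  ultimately show "e ` M - X \<in> (`) e ` \<Sigma>" using A by auto
next
  fix X Y assume "X \<in> (`) e ` \<Sigma>" "Y \<in> (`) e ` \<Sigma>"
  then obtain A B where AB: "A \<in> \<Sigma>" "X = e ` A" "B \<in> \<Sigma>" "Y = e ` B" by blast
  have "A \<union> B \<in> \<Sigma>" using AB inf_fieldD(4)[OF \<Sigma>] by blast
  moreover have "X \<union> Y = e ` (A \<union> B)" using AB by auto
  ultimately show "X \<union> Y \<in> (`) e ` \<Sigma>" by blast
next
  fix F assume F: "F \<subseteq> (`) e ` \<Sigma>" "F \<noteq> {}"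
  define F' where "F' = {A\<in>\<Sigma>. e ` A \<in> F}"
  have F'ne: "F' \<noteq> {}" using F unfolding F'_def by blast
  have "\<Inter>F' \<in> \<Sigma>" by (rule inf_fieldD(5)[OF \<Sigma>]) (use F'ne in \<open>auto simp: F'_def\<close>)
  moreover have "\<Inter>F = e ` \<Inter>F'"
  proof
    show "\<Inter>F \<subseteq> e ` \<Inter>F'"
    proof
      fix y assume y: "y \<in> \<Inter>F"
      obtain X0 where "X0 \<in> F" using F(2) by blast
      then obtain A0 where "X0 = e ` A0" using F(1) by blast
      hence "y \<in> e ` A0" using y \<open>X0 \<in> F\<close> by blast
      then obtain x where x: "y = e x" by blast
      have "x \<in> A" if "A \<in> F'" for A
      proof -
        have "e ` A \<in> F" using that by (simp add: F'_def)
        hence "e x \<in> e ` A" using y x by blast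
        thus "x \<in> A" using e by (simp add: inj_image_mem_iff)
      qed
      thus "y \<in> e ` \<Inter>F'" using x by blast
    qed
    show "e ` \<Inter>F' \<subseteq> \<Inter>F"
    proof
      fix y assume "y \<in> e ` \<Inter>F'"
      then obtain x where x: "x \<in> \<Inter>F'" "y = e x" by blast
      show "y \<in> \<Inter>F"
      proof
        fix X assume X: "X \<in> F"
        then obtain A where A: "A \<in> \<Sigma>" "X = e ` A" using F(1) by blast
        hence "A \<in> F'" using X by (simp add: F'_def)
        thus "y \<in> X" using x A by blast
      qed
    qed
  qed
  ultimately show "\<Inter>F \<in> (`) e ` \<Sigma>" by blast
qed

lemma inj_enc0: "inj enc0" by (rule injI) simp

locale infsp =
  fixes I :: "'i set" and S :: "'s set" and M :: "'m set" and \<Sigma> :: "'m set set"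
    and T :: "'i \<Rightarrow> 'm \<Rightarrow> 'm set \<Rightarrow> real" and \<theta> :: "'m \<Rightarrow> 's" and tb :: "'b itself"
  assumes sp: "inf_type_space I S M \<Sigma> T \<theta>"
begin

lemma \<Sigma>f: "inf_field M \<Sigma>" using sp unfolding inf_type_space_def by blast
lemma Tmeas: "i \<in> I \<Longrightarrow> meas M \<Sigma> (Delta M \<Sigma>) (Delta_field M \<Sigma>) (T i)"
  using sp unfolding inf_type_space_def by blast
lemma TD: "i \<in> I \<Longrightarrow> x \<in> M \<Longrightarrow> T i x \<in> Delta M \<Sigma>" using Tmeas unfolding meas_def by blast
lemma Tfa: "i \<in> I \<Longrightarrow> x \<in> M \<Longrightarrow> fa_prob M \<Sigma> (T i x)" using TD by (simp add: Delta_def)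
lemma Tpre: "i \<in> I \<Longrightarrow> D \<in> Delta_field M \<Sigma> \<Longrightarrow> {x\<in>M. T i x \<in> D} \<in> \<Sigma>"
  using Tmeas unfolding meas_def by blast
lemma Tintro: "i \<in> I \<Longrightarrow> x \<in> M \<Longrightarrow> A \<in> \<Sigma> \<Longrightarrow> {m'\<in>M. T i m' = T i x} \<subseteq> A \<Longrightarrow> T i x A = 1"
  using sp unfolding inf_type_space_def by blast
lemma \<theta>meas: "meas M \<Sigma> S (Pow S) \<theta>" using sp unfolding inf_type_space_def by blast
lemma Mne: "M \<noteq> {}" using sp unfolding inf_type_space_def by blast
lemma \<Sigma>M: "E \<in> \<Sigma> \<Longrightarrow> E \<subseteq> M" using inf_fieldD(1)[OF \<Sigma>f] by blast

lemma inj0: "inj (enc0 :: 'm \<Rightarrow> ('m + 'b) set set)" by (rule inj_enc0)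

definition Z0 :: "('m + 'b) set set set" where "Z0 = enc0 ` M"
definition \<Sigma>0 :: "('m + 'b) set set set set" where "\<Sigma>0 = (`) enc0 ` \<Sigma>"
definition T0 :: "'i \<Rightarrow> ('m + 'b) set set \<Rightarrow> ('m + 'b) set set set \<Rightarrow> real" where
  "T0 i z = (\<lambda>A. if A \<in> \<Sigma>0 then T i (dec z) {x\<in>M. enc0 x \<in> A} else 0)"
definition \<theta>0 :: "('m + 'b) set set \<Rightarrow> 's" where "\<theta>0 z = \<theta> (dec z)"

lemma pre_img: "B \<subseteq> M \<Longrightarrow> {x\<in>M. (enc0 x :: ('m + 'b) set set) \<in> enc0 ` B} = B"
  using inj0 by (auto simp: inj_image_mem_iff)

lemma T0_img: "B \<in> \<Sigma> \<Longrightarrow> T0 i z (enc0 ` B) = T i (dec z) B"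
proof -
  assume B: "B \<in> \<Sigma>"
  have "enc0 ` B \<in> \<Sigma>0" using B by (simp add: \<Sigma>0_def)
  thus ?thesis using pre_img[OF \<Sigma>M[OF B]] by (simp add: T0_def)
qed

lemma \<Sigma>0f: "inf_field Z0 \<Sigma>0"
  unfolding Z0_def \<Sigma>0_def by (rule transport_inf_field[OF inj0 \<Sigma>f])

lemma T0fa: "i \<in> I \<Longrightarrow> z \<in> Z0 \<Longrightarrow> fa_prob Z0 \<Sigma>0 (T0 i z)"
proof -
  assume i: "i \<in> I" and z: "z \<in> Z0"
  then obtain x where x: "x \<in> M" "z = enc0 x" by (auto simp: Z0_def)
  have fa: "fa_prob M \<Sigma> (T i x)" by (rule Tfa[OF i x(1)])
  show ?thesis unfolding fa_prob_def
  proof (intro conjI ballI allI impI)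
    fix A assume "A \<in> \<Sigma>0"
    then obtain B where B: "B \<in> \<Sigma>" "A = enc0 ` B" by (auto simp: \<Sigma>0_def)
    show "0 \<le> T0 i z A" using B T0_img[OF B(1)] x fa unfolding fa_prob_def by simp
  next
    have "M \<in> \<Sigma>" using inf_fieldD(2)[OF \<Sigma>f] .
    hence "T0 i z Z0 = T i x M" using T0_img x by (simp add: Z0_def)
    thus "T0 i z Z0 = 1" using fa unfolding fa_prob_def by simp
  next
    fix A A' assume A: "A \<in> \<Sigma>0" "A' \<in> \<Sigma>0" "A \<inter> A' = {}"
    then obtain B B' where B: "B \<in> \<Sigma>" "A = enc0 ` B" "B' \<in> \<Sigma>" "A' = enc0 ` B'" by (auto simp: \<Sigma>0_def)
    have BB: "B \<inter> B' = {}" using A(3) B by blast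
    have U: "B \<union> B' \<in> \<Sigma>" using B inf_fieldD(4)[OF \<Sigma>f] by blast
    have "A \<union> A' = enc0 ` (B \<union> B')" using B by auto
    hence "T0 i z (A \<union> A') = T i x (B \<union> B')" using T0_img[OF U] x by simp
    also have "\<dots> = T i x B + T i x B'" using fa B(1,3) BB unfolding fa_prob_def by blast
    finally show "T0 i z (A \<union> A') = T0 i z A + T0 i z A'" using T0_img B x by simp
  next
    fix A assume "A \<notin> \<Sigma>0" thus "T0 i z A = 0" by (simp add: T0_def)
  qed
qed

lemma Z0_space: "inf_type_space I S Z0 \<Sigma>0 T0 \<theta>0"
  unfolding inf_type_space_def
proof (intro conjI ballI impI)
  show "Z0 \<noteq> {}" using Mne by (simp add: Z0_def)
  show "inf_field Z0 \<Sigma>0" by (rule \<Sigma>0f)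
next
  fix i assume i: "i \<in> I"
  define Gen where "Gen = {{\<nu>\<in>Delta Z0 \<Sigma>0. \<nu> E \<ge> p} | E p. E \<in> \<Sigma>0 \<and> 0 \<le> p \<and> p \<le> 1}"
  have DF: "Delta_field Z0 \<Sigma>0 = inf_field_generated (Delta Z0 \<Sigma>0) Gen" by (simp add: Delta_field_def Gen_def)
  have inD: "\<forall>z\<in>Z0. T0 i z \<in> Delta Z0 \<Sigma>0" using T0fa[OF i] by (simp add: Delta_def)
  have pre: "\<forall>E\<in>Gen. {z\<in>Z0. T0 i z \<in> E} \<in> \<Sigma>0"
  proof
    fix X assume "X \<in> Gen"
    then obtain A p where Ap: "A \<in> \<Sigma>0" "0 \<le> p" "p \<le> 1" "X = {\<nu>\<in>Delta Z0 \<Sigma>0. \<nu> A \<ge> p}"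
      unfolding Gen_def by blast
    then obtain B where B: "B \<in> \<Sigma>" "A = enc0 ` B" by (auto simp: \<Sigma>0_def)
    have gen: "{\<mu>\<in>Delta M \<Sigma>. \<mu> B \<ge> p} \<in> Delta_field M \<Sigma>"
      unfolding Delta_field_def by (rule gen_sub[THEN subsetD]) (use B Ap in blast)
    have s: "{x\<in>M. T i x \<in> {\<mu>\<in>Delta M \<Sigma>. \<mu> B \<ge> p}} \<in> \<Sigma>" by (rule Tpre[OF i gen])
    have "{z\<in>Z0. T0 i z \<in> X} = enc0 ` {x\<in>M. T i x \<in> {\<mu>\<in>Delta M \<Sigma>. \<mu> B \<ge> p}}"
      using inD TD[OF i] T0_img[OF B(1)] Ap(4) B(2) by (auto simp: Z0_def)
    thus "{z\<in>Z0. T0 i z \<in> X} \<in> \<Sigma>0" using s by (simp add: \<Sigma>0_def)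
  qed
  have GP: "Gen \<subseteq> Pow (Delta Z0 \<Sigma>0)" by (auto simp: Gen_def)
  show "meas Z0 \<Sigma>0 (Delta Z0 \<Sigma>0) (Delta_field Z0 \<Sigma>0) (T0 i)"
    unfolding meas_def DF using meas_gen[OF \<Sigma>0f GP inD pre] inD by blast
next
  fix i m A assume i: "i \<in> I" and m: "m \<in> Z0" and A: "A \<in> \<Sigma>0"
    and sub: "{m' \<in> Z0. T0 i m' = T0 i m} \<subseteq> A"
  obtain x where x: "x \<in> M" "m = enc0 x" using m by (auto simp: Z0_def)
  obtain B where B: "B \<in> \<Sigma>" "A = enc0 ` B" using A by (auto simp: \<Sigma>0_def)
  have "{w\<in>M. T i w = T i x} \<subseteq> B"
  proof
    fix w assume w: "w \<in> {w\<in>M. T i w = T i x}"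
    have d1: "dec (enc0 w :: ('m + 'b) set set) = w" by (rule dec_enc0)
    have d2: "dec m = x" unfolding x(2) by (rule dec_enc0)
    have wT: "T i w = T i x" using w by blast
    have "T0 i (enc0 w) = T0 i m" unfolding T0_def d1 d2 wT by (rule refl)
    hence "enc0 w \<in> A" using sub w by (auto simp: Z0_def)
    thus "w \<in> B" using B(2) inj0 by (simp add: inj_image_mem_iff)
  qed
  hence "T i x B = 1" using Tintro[OF i x(1) B(1)] by blast
  thus "T0 i m A = 1" using T0_img[OF B(1)] x B(2) by simp
next
  show "meas Z0 \<Sigma>0 S (Pow S) \<theta>0" unfolding meas_def
  proof (intro conjI ballI)
    fix z assume "z \<in> Z0" thus "\<theta>0 z \<in> S" using \<theta>meas by (auto simp: Z0_def \<theta>0_def meas_def)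
  next
    fix X assume X: "X \<in> Pow S"
    have "{x\<in>M. \<theta> x \<in> X} \<in> \<Sigma>" using \<theta>meas X unfolding meas_def by blast
    moreover have "{z\<in>Z0. \<theta>0 z \<in> X} = enc0 ` {x\<in>M. \<theta> x \<in> X}" by (auto simp: Z0_def \<theta>0_def)
    ultimately show "{z\<in>Z0. \<theta>0 z \<in> X} \<in> \<Sigma>0" by (simp add: \<Sigma>0_def)
  qed
qed

lemma morph_phi:
  assumes \<phi>M: "\<forall>w\<in>M. \<phi> w \<in> M" and \<phi>E: "\<forall>E\<in>\<Sigma>. \<forall>w\<in>M. \<phi> w \<in> E \<longleftrightarrow> w \<in> E"
    and \<phi>\<theta>: "\<forall>w\<in>M. \<theta> (\<phi> w) = \<theta> w" and \<phi>T: "\<forall>i\<in>I. \<forall>w\<in>M. T i (\<phi> w) = T i w"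
  shows "type_morphism I Z0 \<Sigma>0 T0 \<theta>0 M \<Sigma> T \<theta> (\<lambda>z. \<phi> (dec z))"
  unfolding type_morphism_def meas_def
proof (intro conjI ballI)
  fix z assume "z \<in> Z0" thus "\<phi> (dec z) \<in> M" using \<phi>M by (auto simp: Z0_def)
next
  fix z assume "z \<in> Z0" thus "\<theta>0 z = \<theta> (\<phi> (dec z))" using \<phi>\<theta> by (auto simp: Z0_def \<theta>0_def)
next
  fix E assume E: "E \<in> \<Sigma>"
  have "{z\<in>Z0. \<phi> (dec z) \<in> E} = enc0 ` E" using \<phi>E E \<Sigma>M[OF E] by (auto simp: Z0_def)
  thus "{z\<in>Z0. \<phi> (dec z) \<in> E} \<in> \<Sigma>0" using E by (simp add: \<Sigma>0_def)
next
  fix i z E assume i: "i \<in> I" and z: "z \<in> Z0" and E: "E \<in> \<Sigma>"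
  obtain w where w: "w \<in> M" "z = enc0 w" using z by (auto simp: Z0_def)
  have "{z\<in>Z0. \<phi> (dec z) \<in> E} = enc0 ` E" using \<phi>E E \<Sigma>M[OF E] by (auto simp: Z0_def)
  hence "T0 i z {z\<in>Z0. \<phi> (dec z) \<in> E} = T i w E" using T0_img[OF E] w by simp
  thus "T i (\<phi> (dec z)) E = T0 i z {z\<in>Z0. \<phi> (dec z) \<in> E}" using \<phi>T i w by simp
qed

lemma same_atom:
  assumes U: "inf_universal_wrt TYPE(('m + 'b) set set) I S M \<Sigma> T \<theta>"
    and x: "x \<in> M" and y: "y \<in> M" and xy: "\<forall>E\<in>\<Sigma>. x \<in> E \<longleftrightarrow> y \<in> E"
  shows "x = y"
proof -
  have \<theta>xy: "\<theta> y = \<theta> x"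
  proof -
    have \<theta>S: "\<theta> x \<in> S" using \<theta>meas x unfolding meas_def by blast
    have all: "\<forall>E\<in>Pow S. {w\<in>M. \<theta> w \<in> E} \<in> \<Sigma>" using \<theta>meas unfolding meas_def by blast
    have P: "{\<theta> x} \<in> Pow S" using \<theta>S by blast
    have inS: "{w\<in>M. \<theta> w \<in> {\<theta> x}} \<in> \<Sigma>" using bspec[OF all P] .
    have xin: "x \<in> {w\<in>M. \<theta> w \<in> {\<theta> x}}" using x by simp
    have "y \<in> {w\<in>M. \<theta> w \<in> {\<theta> x}}" using iffD1[OF bspec[OF xy inS] xin] .
    thus ?thesis by simp
  qed
  have Txy: "T i y = T i x" if i: "i \<in> I" for i
  proof -
    have "{T i x} \<in> Delta_field M \<Sigma>" by (rule singleton_Delta_field[OF \<Sigma>f TD[OF i x]])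
    hence inS: "{w\<in>M. T i w \<in> {T i x}} \<in> \<Sigma>" by (rule Tpre[OF i])
    have xin: "x \<in> {w\<in>M. T i w \<in> {T i x}}" using x by simp
    have "y \<in> {w\<in>M. T i w \<in> {T i x}}" using iffD1[OF bspec[OF xy inS] xin] .
    thus ?thesis by simp
  qed
  define \<phi> where "\<phi> = (\<lambda>w. if w = x then y else w)"
  have m1: "type_morphism I Z0 \<Sigma>0 T0 \<theta>0 M \<Sigma> T \<theta> (\<lambda>z. id (dec z))"
    by (rule morph_phi) auto
  have m2: "type_morphism I Z0 \<Sigma>0 T0 \<theta>0 M \<Sigma> T \<theta> (\<lambda>z. \<phi> (dec z))"
    by (rule morph_phi) (use x y xy \<theta>xy Txy in \<open>auto simp: \<phi>_def\<close>)
  have "enc0 x \<in> Z0" using x by (simp add: Z0_def)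
  hence "id (dec (enc0 x :: ('m + 'b) set set)) = \<phi> (dec (enc0 x :: ('m + 'b) set set))"
    using U Z0_space m1 m2 unfolding inf_universal_wrt_def by blast
  thus ?thesis by (simp add: \<phi>_def split: if_splits)
qed

lemma inf_Pow:
  assumes U: "inf_universal_wrt TYPE(('m + 'b) set set) I S M \<Sigma> T \<theta>"
  shows "\<Sigma> = Pow M"
proof
  show "\<Sigma> \<subseteq> Pow M" using inf_fieldD(1)[OF \<Sigma>f] .
  have sing: "{x} \<in> \<Sigma>" if x: "x \<in> M" for x
  proof -
    define At where "At = \<Inter>{E\<in>\<Sigma>. x \<in> E}"
    have "At \<in> \<Sigma>" unfolding At_def
      by (rule inf_fieldD(5)[OF \<Sigma>f]) (use x inf_fieldD(2)[OF \<Sigma>f] in blast)+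
    moreover have "At = {x}"
    proof
      show "{x} \<subseteq> At" by (auto simp: At_def)
      show "At \<subseteq> {x}"
      proof
        fix y assume y: "y \<in> At"
        have yM: "y \<in> M" using y inf_fieldD(2)[OF \<Sigma>f] x by (auto simp: At_def)
        have "\<forall>E\<in>\<Sigma>. x \<in> E \<longleftrightarrow> y \<in> E"
        proof
          fix E assume E: "E \<in> \<Sigma>"
          show "x \<in> E \<longleftrightarrow> y \<in> E"
          proof
            assume "x \<in> E" thus "y \<in> E" using y E by (auto simp: At_def)
          next
            assume yE: "y \<in> E"
            show "x \<in> E"
            proof (rule ccontr)
              assume "x \<notin> E"
              hence "x \<in> M - E" using x by blast
              moreover have "M - E \<in> \<Sigma>" using E inf_fieldD(3)[OF \<Sigma>f] by blast
              ultimately have "y \<in> M - E" using y by (auto simp: At_def)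
              thus False using yE by blast
            qed
          qed
        qed
        thus "y \<in> {x}" using same_atom[OF U x yM] by simp
      qed
    qed
    ultimately show ?thesis by simp
  qed
  show "Pow M \<subseteq> \<Sigma>"
  proof
    fix A assume A: "A \<in> Pow M"
    show "A \<in> \<Sigma>"
    proof (cases "A = M")
      case True thus ?thesis using inf_fieldD(2)[OF \<Sigma>f] by simp
    next
      case False
      define F where "F = (\<lambda>x. M - {x}) ` (M - A)"
      have "F \<noteq> {}" using False A by (auto simp: F_def)
      moreover have "F \<subseteq> \<Sigma>" using sing inf_fieldD(3)[OF \<Sigma>f] by (auto simp: F_def)
      ultimately have "\<Inter>F \<in> \<Sigma>" using inf_fieldD(5)[OF \<Sigma>f] by blast
      moreover have "\<Inter>F = A" using A False by (auto simp: F_def)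
      ultimately show ?thesis by simp
    qed
  qed
qed

end

theorem corollary1:
  fixes I :: "'i set" and S :: "'s set"
  assumes "\<exists>i j. i \<in> I \<and> j \<in> I \<and> i \<noteq> j"
    and "\<exists>s t. s \<in> S \<and> t \<in> S \<and> s \<noteq> t"
  shows "(\<forall>(M::'m set) \<Sigma> T \<theta>.
            \<not> inf_universal_wrt TYPE(('m + 's + 'i + nat) set set) I S M \<Sigma> T \<theta>) \<and>
         (\<forall>(M::'m set) T \<theta>.
            \<not> star_universal_wrt TYPE(('m + 's + 'i + nat) set set) I S M T \<theta>)"
proof -
  have star: "\<not> star_universal_wrt TYPE(('m + 's + 'i + nat) set set) I S M T \<theta>" for M :: "'m set" and T \<theta>
  proof
    assume U0: "star_universal_wrt TYPE(('m + 's + 'i + nat) set set) I S M T \<theta>"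
    interpret su I S M T \<theta> "TYPE('s + 'i + nat)" by unfold_locales (rule U0)
    show False by (rule star_main[OF assms])
  qed
  have inf: "\<not> inf_universal_wrt TYPE(('m + 's + 'i + nat) set set) I S M \<Sigma> T \<theta>" for M :: "'m set" and \<Sigma> T \<theta>
  proof
    assume U: "inf_universal_wrt TYPE(('m + 's + 'i + nat) set set) I S M \<Sigma> T \<theta>"
    hence "inf_type_space I S M \<Sigma> T \<theta>" by (simp add: inf_universal_wrt_def)
    then interpret infsp I S M \<Sigma> T \<theta> "TYPE('s + 'i + nat)" by unfold_locales
    have "\<Sigma> = Pow M" by (rule inf_Pow[OF U])
    hence "star_universal_wrt TYPE(('m + 's + 'i + nat) set set) I S M T \<theta>"
      using inf_Pow_to_star U by blast
    thus False using star by blast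
  qed
  show ?thesis using star inf by blast
qed

end
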